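(* Let $a,b,c>0$ be constants and let $F:\mathbb R\to(0,\infty)$ be measurable with $0<I(F,1)<\infty$. Then for every $h\in\Phi\cup\Psi$, $$as^{orlicz}_{h,aF,bF}\Big(\frac{c^2\|\cdot\|^2}{2}\Big)=a\cdot I(F,c)\cdot h\Big(\frac{(\sqrt{2\pi})^n}{c^{2n}\cdot b\cdot I(F,c)}\Big).$$ If moreover the function $x\mapsto F(\|x\|^2/2)$ is log-concave, the same formula holds for $G^{orlicz}_{h,aF,bF}\big(\frac{c^2\|\cdot\|^2}{2}\big)$.
   Context: For a measurable $F:\mathbb R\to(0,\infty)$ and $c>0$, $I(F,c)=\int_{\mathbb R^n}F(c^2\|x\|^2/2)\,dx$. $\mathcal C$ is the set of convex functions $\psi:\mathbb R^n\to\mathbb R\cup\{+\infty\}$ with domain of nonempty interior; $\psi^*(y)=\sup_x(\langle x,y\rangle-\psi(x))$; $\nabla^2\psi$ is the Alexandrov Hessian; $X_\psi=\{x:\psi(x)<\infty,\ \nabla^2\psi(x)\text{ exists and is invertible}\}$. $I(g,\psi^* )=\int_{X_{\psi^*}}g$; $\mathcal F^+_{\psi^*}$ is the set of integrable $g>0$ on $X_{\psi^*}$ with $0<I(g,\psi^* )<\infty$, and $\mathcal L_{\psi^*}$ its log-concave members. For continuous $h:(0,\infty)\to(0,\infty)$ and measurable $F_1,F_2:\mathbb R\to(0,\infty)$, $V_{h,F_1,F_2}(\psi,g)=\int_{X_\psi}h\big(\frac{g(\nabla\psi(x))}{F_2(\langle x,\nabla\psi(x)\rangle-\psi(x))}\big)F_1(\psi(x))dx$.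 $\Phi$: $h$ constant or strictly convex; $\Psi$: $h$ constant or increasing strictly concave. For $h\in\Phi$, $as^{orlicz}_{h,F_1,F_2}(\psi)=\inf_{g\in\mathcal F^+_{\psi^*}}V_{h,F_1,F_2}(\psi,(\sqrt{2\pi})^ng/I(g,\psi^* ))$ and $G^{orlicz}_{h,F_1,F_2}(\psi)$ is the same infimum over $g\in\mathcal L_{\psi^*}$; for $h\in\Psi$ replace $\inf$ by $\sup$. Here $\frac{c^2\|\cdot\|^2}{2}$ denotes the function $x\mapsto c^2\|x\|^2/2$, and $aF$, $bF$ denote $t\mapsto aF(t)$, $t\mapsto bF(t)$. *)

theory Defs
  imports "HOL-Analysis.Analysis"
begin

text \<open>Ambient space: R^n modelled by an arbitrary euclidean_space 'a, n = DIM('a).\<close>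

definition I_F :: "(real \<Rightarrow> real) \<Rightarrow> real \<Rightarrow> ('a::euclidean_space) itself \<Rightarrow> ennreal" where
  "I_F F c _ = (\<integral>\<^sup>+ x. ennreal (F (c\<^sup>2 * (norm (x::'a))\<^sup>2 / 2)) \<partial>lebesgue)"

definition legendre :: "('a::euclidean_space \<Rightarrow> ereal) \<Rightarrow> 'a \<Rightarrow> ereal" where
  "legendre \<psi> y = (SUP x. ereal (inner x y) - \<psi> x)"

definition has_alex_hessian :: "('a::euclidean_space \<Rightarrow> ereal) \<Rightarrow> 'a \<Rightarrow> 'a \<Rightarrow> ('a \<Rightarrow> 'a) \<Rightarrow> bool" where
  "has_alex_hessian \<psi> x g A \<longleftrightarrow>
     x \<in> interior {y. \<psi> y < \<infinity>} \<and> (\<forall>y. \<psi> y \<noteq> -\<infinity>) \<and>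
     linear A \<and> (\<forall>u v. inner (A u) v = inner u (A v)) \<and>
     ((\<lambda>y. (real_of_ereal (\<psi> y) - real_of_ereal (\<psi> x) - inner g (y - x)
              - inner (A (y - x)) (y - x) / 2) / (norm (y - x))\<^sup>2) \<longlongrightarrow> 0) (at x)"

definition Xset :: "('a::euclidean_space \<Rightarrow> ereal) \<Rightarrow> 'a set" where
  "Xset \<psi> = {x. \<psi> x < \<infinity> \<and> (\<exists>g A. has_alex_hessian \<psi> x g A \<and> bij A)}"

text \<open>gradient (meaningful on Xset)\<close>
definition alex_grad :: "('a::euclidean_space \<Rightarrow> ereal) \<Rightarrow> 'a \<Rightarrow> 'a" where
  "alex_grad \<psi> x = (SOME g. \<exists>A. has_alex_hessian \<psi> x g A)"

definition I_g :: "('a::euclidean_space \<Rightarrow> real) \<Rightarrow> ('a \<Rightarrow> ereal) \<Rightarrow> real" where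
  "I_g g \<psi>s = (LINT x : Xset \<psi>s | lebesgue. g x)"

definition Fplus :: "('a::euclidean_space \<Rightarrow> ereal) \<Rightarrow> ('a \<Rightarrow> real) set" where
  "Fplus \<psi>s = {g. (\<forall>x\<in>Xset \<psi>s. 0 < g x) \<and> set_integrable lebesgue (Xset \<psi>s) g \<and> 0 < I_g g \<psi>s}"

definition log_concave_on :: "'a::real_vector set \<Rightarrow> ('a \<Rightarrow> real) \<Rightarrow> bool" where
  "log_concave_on X g \<longleftrightarrow> (\<forall>x\<in>X. \<forall>y\<in>X. \<forall>t::real. 0 \<le> t \<and> t \<le> 1 \<and> t *\<^sub>R x + (1 - t) *\<^sub>R y \<in> X \<longrightarrow>
      g x powr t * g y powr (1 - t) \<le> g (t *\<^sub>R x + (1 - t) *\<^sub>R y))"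

definition Lset :: "('a::euclidean_space \<Rightarrow> ereal) \<Rightarrow> ('a \<Rightarrow> real) set" where
  "Lset \<psi>s = {g \<in> Fplus \<psi>s. log_concave_on (Xset \<psi>s) g}"

definition V_orlicz :: "(real \<Rightarrow> real) \<Rightarrow> (real \<Rightarrow> real) \<Rightarrow> (real \<Rightarrow> real) \<Rightarrow>
     ('a::euclidean_space \<Rightarrow> ereal) \<Rightarrow> ('a \<Rightarrow> real) \<Rightarrow> ennreal" where
  "V_orlicz h F1 F2 \<psi> g = (\<integral>\<^sup>+ x. indicator (Xset \<psi>) x *
      ennreal (h (g (alex_grad \<psi> x) /
                  F2 (inner x (alex_grad \<psi> x) - real_of_ereal (\<psi> x)))
               * F1 (real_of_ereal (\<psi> x))) \<partial>lebesgue)"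

definition strictly_convex_on :: "real set \<Rightarrow> (real \<Rightarrow> real) \<Rightarrow> bool" where
  "strictly_convex_on S f \<longleftrightarrow> (\<forall>x\<in>S. \<forall>y\<in>S. \<forall>t. x \<noteq> y \<and> 0 < t \<and> t < 1 \<longrightarrow>
      f ((1 - t) * x + t * y) < (1 - t) * f x + t * f y)"

definition strictly_concave_on :: "real set \<Rightarrow> (real \<Rightarrow> real) \<Rightarrow> bool" where
  "strictly_concave_on S f \<longleftrightarrow> strictly_convex_on S (\<lambda>x. - f x)"

definition admissible_h :: "(real \<Rightarrow> real) \<Rightarrow> bool" where
  "admissible_h h \<longleftrightarrow> continuous_on {0<..} h \<and> (\<forall>t>0. 0 < h t)"

definition const_on_pos :: "(real \<Rightarrow> real) \<Rightarrow> bool" where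
  "const_on_pos h \<longleftrightarrow> (\<exists>k. \<forall>t>0. h t = k)"

definition PhiSet :: "(real \<Rightarrow> real) set" where
  "PhiSet = {h. admissible_h h \<and> (const_on_pos h \<or> strictly_convex_on {0<..} h)}"

definition PsiSet :: "(real \<Rightarrow> real) set" where
  "PsiSet = {h. admissible_h h \<and> (const_on_pos h \<or>
      (mono_on {0<..} h \<and> strictly_concave_on {0<..} h))}"

definition normalize_g :: "('a::euclidean_space \<Rightarrow> ereal) \<Rightarrow> ('a \<Rightarrow> real) \<Rightarrow> 'a \<Rightarrow> real" where
  "normalize_g \<psi>s g = (\<lambda>y. sqrt (2 * pi) ^ DIM('a) * g y / I_g g \<psi>s)"

text \<open>as^orlicz and G^orlicz: infimum version (h in Phi) and supremum version (h in Psi)\<close>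
definition as_orlicz_inf :: "(real \<Rightarrow> real) \<Rightarrow> (real \<Rightarrow> real) \<Rightarrow> (real \<Rightarrow> real) \<Rightarrow> ('a::euclidean_space \<Rightarrow> ereal) \<Rightarrow> ennreal" where
  "as_orlicz_inf h F1 F2 \<psi> = (INF g\<in>Fplus (legendre \<psi>). V_orlicz h F1 F2 \<psi> (normalize_g (legendre \<psi>) g))"
definition as_orlicz_sup :: "(real \<Rightarrow> real) \<Rightarrow> (real \<Rightarrow> real) \<Rightarrow> (real \<Rightarrow> real) \<Rightarrow> ('a::euclidean_space \<Rightarrow> ereal) \<Rightarrow> ennreal" where
  "as_orlicz_sup h F1 F2 \<psi> = (SUP g\<in>Fplus (legendre \<psi>). V_orlicz h F1 F2 \<psi> (normalize_g (legendre \<psi>) g))"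
definition G_orlicz_inf :: "(real \<Rightarrow> real) \<Rightarrow> (real \<Rightarrow> real) \<Rightarrow> (real \<Rightarrow> real) \<Rightarrow> ('a::euclidean_space \<Rightarrow> ereal) \<Rightarrow> ennreal" where
  "G_orlicz_inf h F1 F2 \<psi> = (INF g\<in>Lset (legendre \<psi>). V_orlicz h F1 F2 \<psi> (normalize_g (legendre \<psi>) g))"
definition G_orlicz_sup :: "(real \<Rightarrow> real) \<Rightarrow> (real \<Rightarrow> real) \<Rightarrow> (real \<Rightarrow> real) \<Rightarrow> ('a::euclidean_space \<Rightarrow> ereal) \<Rightarrow> ennreal" where
  "G_orlicz_sup h F1 F2 \<psi> = (SUP g\<in>Lset (legendre \<psi>). V_orlicz h F1 F2 \<psi> (normalize_g (legendre \<psi>) g))"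

end

theory Submission
  imports Defs "HOL-Probability.Probability"
begin


lemma lebesgue_scale_eq:
  assumes "r \<noteq> 0"
  shows "(lebesgue::'a::euclidean_space measure) = density (distr lebesgue lebesgue (\<lambda>x. r *\<^sub>R x)) (\<lambda>_. ennreal (\<bar>r\<bar> ^ DIM('a)))"
  using lebesgue_affine_euclidean[where c="\<lambda>_::'a. r" and t=0] assms
  unfolding scaleR_scaleR[symmetric] scaleR_sum_right[symmetric] euclidean_representation prod_constant by simp

lemma nn_integral_scale_lebesgue:
  fixes f :: "'a::euclidean_space \<Rightarrow> ennreal"
  assumes f: "f \<in> borel_measurable lebesgue" and r: "r \<noteq> 0"
  shows "(\<integral>\<^sup>+x. f x \<partial>lebesgue) = ennreal (\<bar>r\<bar> ^ DIM('a)) * (\<integral>\<^sup>+x. f (r *\<^sub>R x) \<partial>lebesgue)"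
proof -
  have "(\<integral>\<^sup>+x. f x \<partial>lebesgue) = (\<integral>\<^sup>+x. f x \<partial>(density (distr lebesgue lebesgue (\<lambda>x. r *\<^sub>R x)) (\<lambda>_. ennreal (\<bar>r\<bar> ^ DIM('a)))))"
    by (rule arg_cong[OF lebesgue_scale_eq[OF r]])
  also have "\<dots> = ennreal (\<bar>r\<bar> ^ DIM('a)) * (\<integral>\<^sup>+x. f x \<partial>(distr lebesgue lebesgue (\<lambda>x. r *\<^sub>R x)))"
    using f by (simp add: nn_integral_density nn_integral_cmult)
  also have "\<dots> = ennreal (\<bar>r\<bar> ^ DIM('a)) * (\<integral>\<^sup>+x. f (r *\<^sub>R x) \<partial>lebesgue)"
    using f by (subst nn_integral_distr) auto
  finally show ?thesis .
qed

lemma concave_pos_bound: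
  fixes h :: "real \<Rightarrow> real"
  assumes "concave_on {0<..} h" "mono_on {0<..} h" "\<forall>t>0. 0 < h t" "0 < t"
  shows "h t \<le> h 1 * (1 + 2 * t)"
proof (cases "t \<le> 1")
  case True
  then have "h t \<le> h 1" using assms(2,4) by (auto simp: mono_on_def)
  then show ?thesis using assms(3,4) by (smt (verit) mult_le_cancel_left1 zero_less_one)
next
  case False
  define th where "th = 1 / (2*t - 1)"
  have th: "0 \<le> th" "th \<le> 1" using False by (auto simp: th_def)
  have pos: "2*t - 1 > 0" using False by simp
  define u where "u = 2*t - 1"
  have tu: "t = (u+1)/2" by (simp add: u_def)
  have "(1 - th) * (1/2::real) + th * t = (1 - 1/u)/2 + 1/u * ((u+1)/2)"
  proof -
    have th_u: "th = 1/u" by (simp add: th_def u_def)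
    show ?thesis unfolding th_u by (subst tu, simp)
  qed
  also have "\<dots> = 1"
  proof -
    have upos: "u > 0" using pos by (simp add: u_def)
    then show ?thesis by (simp add: field_simps)
  qed
  finally have eq: "(1 - th) *\<^sub>R (1/2::real) + th *\<^sub>R t = 1" by simp
  have "(1 - th) * h (1/2) + th * h t \<le> h 1"
    using concave_onD[OF assms(1) th, of "1/2" t] assms(4) eq by simp
  moreover have "0 \<le> (1 - th) * h (1/2)"
  proof -
    have "0 < h (1/2)" using assms(3) by simp
    then show ?thesis using th by simp
  qed
  ultimately have "th * h t \<le> h 1" by linarith
  then have "h t \<le> h 1 * (2*t - 1)" using False by (simp add: th_def field_simps)
  then show ?thesis using assms(3) by (smt (verit) mult_left_mono zero_less_one)
qed

lemma jensen_core:
  fixes w X :: "'b \<Rightarrow> real" and h :: "real \<Rightarrow> real" and M :: "'b measure"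
  assumes wm[measurable]: "w \<in> borel_measurable M" and wpos: "\<forall>x. 0 < w x"
    and wint: "(\<integral>\<^sup>+x. ennreal (w x) \<partial>M) = ennreal W" and W: "0 < W"
    and Xm[measurable]: "X \<in> borel_measurable M" and Xpos: "\<forall>x. 0 < X x"
    and Xint: "integrable M (\<lambda>x. w x * X x)"
    and hXm[measurable]: "(\<lambda>x. h (X x)) \<in> borel_measurable M"
    and hpos: "\<forall>t>0. 0 < h t"
  shows jensen_core_convex: "convex_on {0<..} h \<Longrightarrow>
      ennreal (W * h ((\<integral>x. w x * X x \<partial>M) / W)) \<le> (\<integral>\<^sup>+x. ennreal (h (X x) * w x) \<partial>M)"
    and jensen_core_concave: "concave_on {0<..} h \<Longrightarrow> mono_on {0<..} h \<Longrightarrow>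
      (\<integral>\<^sup>+x. ennreal (h (X x) * w x) \<partial>M) \<le> ennreal (W * h ((\<integral>x. w x * X x \<partial>M) / W))"
proof -
  define P where "P = density M (\<lambda>x. ennreal (w x / W))"
  have wWm[measurable]: "(\<lambda>x. w x / W) \<in> borel_measurable M" by measurable
  have spP: "space P = space M" by (simp add: P_def)
  have measP: "f \<in> borel_measurable P" if "f \<in> borel_measurable M" for f :: "'b \<Rightarrow> real"
    using that by (simp add: P_def)
  have "emeasure P (space P) = (\<integral>\<^sup>+x. ennreal (w x / W) * indicator (space M) x \<partial>M)"
    unfolding P_def by (simp add: emeasure_density)
  also have "\<dots> = (\<integral>\<^sup>+x. ennreal (w x) * ennreal (1 / W) \<partial>M)"
  proof (intro nn_integral_cong)
    fix x assume "x \<in> space M"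
    have "0 \<le> w x" "0 \<le> 1/W" using wpos W by (auto intro: less_imp_le)
    then have "ennreal (w x) * ennreal (1 / W) = ennreal (w x * (1/W))" by (rule ennreal_mult[symmetric])
    then show "ennreal (w x / W) * indicator (space M) x = ennreal (w x) * ennreal (1 / W)"
      using \<open>x \<in> space M\<close> by simp
  qed
  also have "\<dots> = ennreal W * ennreal (1/W)" by (simp add: nn_integral_multc wint)
  also have "\<dots> = 1" using W by (simp add: ennreal_mult[symmetric])
  finally have "emeasure P (space P) = 1" .
  then interpret P: prob_space P by (rule prob_spaceI)
  have nnP: "(\<integral>\<^sup>+x. ennreal (h (X x) * w x) \<partial>M) = ennreal W * (\<integral>\<^sup>+x. ennreal (h (X x)) \<partial>P)"
  proof -
    have "(\<integral>\<^sup>+x. ennreal (h (X x)) \<partial>P) = (\<integral>\<^sup>+x. ennreal (w x / W) * ennreal (h (X x)) \<partial>M)"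
      unfolding P_def by (simp add: nn_integral_density)
    then have "ennreal W * (\<integral>\<^sup>+x. ennreal (h (X x)) \<partial>P) = (\<integral>\<^sup>+x. ennreal W * (ennreal (w x / W) * ennreal (h (X x))) \<partial>M)"
      by (simp add: nn_integral_cmult)
    also have "\<dots> = (\<integral>\<^sup>+x. ennreal (h (X x) * w x) \<partial>M)"
    proof (intro nn_integral_cong)
      fix x
      have "0 < h (X x)" using hpos Xpos by auto
      then show "ennreal W * (ennreal (w x / W) * ennreal (h (X x))) = ennreal (h (X x) * w x)"
        using W wpos[rule_format, of x] by (simp add: ennreal_mult[symmetric])
    qed
    finally show ?thesis by simp
  qed
  have intXP: "integrable P X"
    unfolding P_def
  proof (subst integrable_density)
    have "integrable M (\<lambda>x. w x * X x / W)" using Xint by (rule integrable_divide_zero)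
    then show "integrable M (\<lambda>x. (w x / W) *\<^sub>R X x)" by (simp add: mult.commute)
  qed (use wpos W in \<open>auto intro!: AE_I2 divide_nonneg_nonneg less_imp_le\<close>)
  have EX: "P.expectation X = (\<integral>x. w x * X x \<partial>M) / W"
    unfolding P_def
  proof (subst integral_density)
    have "(\<lambda>x. (w x / W) *\<^sub>R X x) = (\<lambda>x. w x * X x / W)" by (simp add: fun_eq_iff)
    then show "(\<integral>x. (w x / W) *\<^sub>R X x \<partial>M) = (\<integral>x. w x * X x \<partial>M) / W" by simp
  qed (use wpos W in \<open>auto intro!: AE_I2 divide_nonneg_nonneg less_imp_le\<close>)
  have AEX: "AE x in P. X x \<in> {0<..}" using Xpos by simp
  have nnE: "(\<integral>\<^sup>+x. ennreal (h (X x)) \<partial>P) = ennreal (P.expectation (\<lambda>x. h (X x)))"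
    if "integrable P (\<lambda>x. h (X x))"
    using that hpos Xpos by (intro nn_integral_eq_integral) (auto intro: less_imp_le)
  show "ennreal (W * h ((\<integral>x. w x * X x \<partial>M) / W)) \<le> (\<integral>\<^sup>+x. ennreal (h (X x) * w x) \<partial>M)"
    if cv: "convex_on {0<..} h"
  proof (cases "integrable P (\<lambda>x. h (X x))")
    case True
    have "h (P.expectation X) \<le> P.expectation (\<lambda>x. h (X x))"
      by (rule P.jensens_inequality[OF intXP AEX _ True cv, of 0]) simp
    then have "ennreal (W * h ((\<integral>x. w x * X x \<partial>M) / W)) \<le> ennreal W * ennreal (P.expectation (\<lambda>x. h (X x)))"
      using W by (subst ennreal_mult'[symmetric]) (auto simp: EX intro!: ennreal_leI mult_left_mono)
    then show ?thesis using nnP nnE[OF True] by simp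
  next
    case False
    have e1: "(\<integral>\<^sup>+x. ennreal (norm (h (X x))) \<partial>P) = (\<integral>\<^sup>+x. ennreal (h (X x)) \<partial>P)"
      using hpos Xpos by (intro nn_integral_cong) (simp add: less_imp_le)
    have e2: "(\<lambda>x. h (X x)) \<in> borel_measurable P" by (rule measP) simp
    have "(\<integral>\<^sup>+x. ennreal (h (X x)) \<partial>P) = \<infinity>"
    proof -
      have "\<not> (\<integral>\<^sup>+x. ennreal (h (X x)) \<partial>P) < \<infinity>"
        using False e1 e2 unfolding integrable_iff_bounded by auto
      then show ?thesis by (simp add: less_top[symmetric])
    qed
    then have "(\<integral>\<^sup>+x. ennreal (h (X x) * w x) \<partial>M) = \<infinity>"
      using nnP W by (simp add: ennreal_mult_top)
    then show ?thesis by simp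
  qed
  show "(\<integral>\<^sup>+x. ennreal (h (X x) * w x) \<partial>M) \<le> ennreal (W * h ((\<integral>x. w x * X x \<partial>M) / W))"
    if cc: "concave_on {0<..} h" and mo: "mono_on {0<..} h"
  proof -
    have bnd: "\<bar>h (X x)\<bar> \<le> \<bar>h 1 * (1 + 2 * X x)\<bar>" for x
    proof -
      have "h (X x) \<le> h 1 * (1 + 2 * X x)" using concave_pos_bound[OF cc mo hpos] Xpos by auto
      moreover have "0 < h (X x)" "0 < h 1" using hpos Xpos by auto
      ultimately show ?thesis using Xpos[rule_format, of x] by simp
    qed
    have intB: "integrable P (\<lambda>x. h 1 * (1 + 2 * X x))"
      using intXP by (intro integrable_mult_right Bochner_Integration.integrable_add) auto
    have inth: "integrable P (\<lambda>x. h (X x))"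
      by (rule Bochner_Integration.integrable_bound[OF intB]) (auto intro: measP AE_I2 bnd)
    have cv': "convex_on {0<..} (\<lambda>t. - h t)" using cc by (simp add: convex_on_iff_concave)
    have "- h (P.expectation X) \<le> P.expectation (\<lambda>x. - h (X x))"
      by (rule P.jensens_inequality[OF intXP AEX _ _ cv', of 0]) (use inth in auto)
    then have le: "P.expectation (\<lambda>x. h (X x)) \<le> h ((\<integral>x. w x * X x \<partial>M) / W)"
      by (simp add: EX)
    have "(\<integral>\<^sup>+x. ennreal (h (X x) * w x) \<partial>M) = ennreal W * ennreal (P.expectation (\<lambda>x. h (X x)))"
      using nnP nnE[OF inth] by simp
    also have "\<dots> \<le> ennreal W * ennreal (h ((\<integral>x. w x * X x \<partial>M) / W))"
      using le by (intro mult_left_mono ennreal_leI) auto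
    also have "\<dots> = ennreal (W * h ((\<integral>x. w x * X x \<partial>M) / W))"
      using W by (simp add: ennreal_mult')
    finally show ?thesis .
  qed
qed



lemma quad_hess:
  fixes x :: "'a::euclidean_space"
  shows "has_alex_hessian (\<lambda>x::'a. ereal (k * (norm x)\<^sup>2 / 2)) x (k *\<^sub>R x) (\<lambda>v. k *\<^sub>R v)"
proof -
  have z: "k * (norm y)\<^sup>2 / 2 - k * (norm x)\<^sup>2 / 2 - k * (inner x (y - x))
              - k * (inner (y - x) (y - x)) / 2 = 0" for y :: 'a
    by (simp add: power2_norm_eq_inner inner_diff_left inner_diff_right inner_commute field_simps)
  show ?thesis
    unfolding has_alex_hessian_def
    by (simp add: z linear_scale_self)
qed

lemma linear_scale_alex: "linear A \<Longrightarrow> A (t *\<^sub>R d) = t *\<^sub>R A d"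
  by (simp add: linear_scale)

lemma grad_unique:
  fixes x g g' :: "'a::euclidean_space"
  assumes H1: "has_alex_hessian \<psi> x g A" and H2: "has_alex_hessian \<psi> x g' A'"
  shows "g = g'"
proof (rule ccontr)
  assume ne: "g \<noteq> g'"
  define d where "d = g' - g"
  define N where "N = inner d d"
  have dne: "d \<noteq> 0" using ne by (simp add: d_def)
  have Npos: "N > 0" using dne by (simp add: N_def)
  have lA: "linear A" "linear A'" using H1 H2 by (auto simp: has_alex_hessian_def)
  define R where "R = (\<lambda>y. real_of_ereal (\<psi> y) - real_of_ereal (\<psi> x))"
  define f where "f = (\<lambda>g A y. (R y - inner g (y - x) - inner (A (y - x)) (y - x) / 2) / (norm (y - x))\<^sup>2)"
  have t1: "(f g A \<longlongrightarrow> 0) (at x)" "(f g' A' \<longlongrightarrow> 0) (at x)"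
    using H1 H2 by (auto simp: has_alex_hessian_def f_def R_def)
  define p where "p = (\<lambda>t::real. x + t *\<^sub>R d)"
  have pl: "filterlim p (at x) (at_right 0)"
  proof (subst filterlim_at, intro conjI)
    show "\<forall>\<^sub>F t in at_right 0. p t \<in> UNIV \<and> p t \<noteq> x"
      using dne by (auto simp: p_def eventually_at_right_less intro: eventually_mono[OF eventually_at_right_less])
    have "((\<lambda>t. x + t *\<^sub>R d) \<longlongrightarrow> x + 0 *\<^sub>R d) (at_right 0)"
      by (intro tendsto_intros)
    then show "(p \<longlongrightarrow> x) (at_right 0)" by (simp add: p_def)
  qed
  have t2: "((\<lambda>t. t * (f g A (p t) - f g' A' (p t))) \<longlongrightarrow> 0 * (0 - 0)) (at_right 0)"
    by (intro tendsto_intros filterlim_compose[OF t1(1) pl] filterlim_compose[OF t1(2) pl])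
  define K where "K = (inner (A' d) d - inner (A d) d) / 2"
  have eq: "t * (f g A (p t) - f g' A' (p t)) = 1 + t * (K / N)" if "t > 0" for t
  proof -
    have pd: "p t - x = t *\<^sub>R d" by (simp add: p_def)
    have nn: "(norm (t *\<^sub>R d))\<^sup>2 = t\<^sup>2 * N"
      by (simp add: N_def power2_norm_eq_inner power_mult_distrib)
    have gg: "inner g' d - inner g d = N" by (simp add: N_def d_def inner_diff_left)
    show ?thesis
      unfolding f_def pd nn using that Npos gg
      by (simp add: linear_scale_alex[OF lA(1)] linear_scale_alex[OF lA(2)] K_def field_simps power2_eq_square)
  qed
  have t3: "((\<lambda>t. t * (f g A (p t) - f g' A' (p t))) \<longlongrightarrow> 1 + 0 * (K / N)) (at_right 0)"
  proof (rule Lim_transform_eventually[where f="\<lambda>t. 1 + t * (K / N)"])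
    show "((\<lambda>t. 1 + t * (K / N)) \<longlongrightarrow> 1 + 0 * (K / N)) (at_right 0)"
      by (intro tendsto_intros)
    show "\<forall>\<^sub>F t in at_right 0. 1 + t * (K / N) = t * (f g A (p t) - f g' A' (p t))"
      using eq by (auto intro: eventually_mono[OF eventually_at_right_less])
  qed
  have "(0::real) * (0 - 0) = 1 + 0 * (K / N)"
    by (rule tendsto_unique[OF _ t2 t3]) simp
  then show False by simp
qed



lemma bij_scale: "k \<noteq> 0 \<Longrightarrow> bij (\<lambda>v::'a::real_vector. k *\<^sub>R v)"
  unfolding bij_def inj_def surj_def
  by (auto intro!: exI[of _ "(1/k) *\<^sub>R y" for y])

lemma Xset_quad:
  assumes "k \<noteq> 0"
  shows "Xset (\<lambda>x::'a::euclidean_space. ereal (k * (norm x)\<^sup>2 / 2)) = UNIV"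
  unfolding Xset_def using quad_hess[of k] bij_scale[OF assms] by auto

lemma grad_quad:
  "alex_grad (\<lambda>x::'a::euclidean_space. ereal (k * (norm x)\<^sup>2 / 2)) x = k *\<^sub>R x"
  unfolding alex_grad_def
proof (rule some_equality)
  show "\<exists>A. has_alex_hessian (\<lambda>x::'a. ereal (k * (norm x)\<^sup>2 / 2)) x (k *\<^sub>R x) A"
    using quad_hess by blast
  show "g = k *\<^sub>R x" if "\<exists>A. has_alex_hessian (\<lambda>x::'a. ereal (k * (norm x)\<^sup>2 / 2)) x g A" for g
    using that grad_unique quad_hess by metis
qed

lemma legendre_quad:
  fixes c :: real
  assumes c: "c > 0"
  shows "legendre (\<lambda>x::'a::euclidean_space. ereal (c\<^sup>2 * (norm x)\<^sup>2 / 2))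
       = (\<lambda>y. ereal ((1 / c\<^sup>2) * (norm y)\<^sup>2 / 2))"
proof
  fix y :: 'a
  have ub: "inner x y - c\<^sup>2 * (norm x)\<^sup>2 / 2 \<le> (1 / c\<^sup>2) * (norm y)\<^sup>2 / 2" for x
  proof -
    have "0 \<le> (norm (c *\<^sub>R x - (1/c) *\<^sub>R y))\<^sup>2" by simp
    also have "\<dots> = c\<^sup>2 * (norm x)\<^sup>2 - 2 * inner x y + (1/c\<^sup>2) * (norm y)\<^sup>2"
      using c unfolding power2_norm_eq_inner
      by (simp add: inner_diff_left inner_diff_right inner_commute power2_eq_square field_simps)
    finally show ?thesis by (simp add: field_simps)
  qed
  have att: "inner ((1/c\<^sup>2) *\<^sub>R y) y - c\<^sup>2 * (norm ((1/c\<^sup>2) *\<^sub>R y))\<^sup>2 / 2 = (1 / c\<^sup>2) * (norm y)\<^sup>2 / 2"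
    using c unfolding power2_norm_eq_inner by (simp add: power2_eq_square field_simps)
  show "legendre (\<lambda>x::'a. ereal (c\<^sup>2 * (norm x)\<^sup>2 / 2)) y = ereal ((1 / c\<^sup>2) * (norm y)\<^sup>2 / 2)"
    unfolding legendre_def
  proof (rule antisym)
    show "(SUP x. ereal (inner x y) - ereal (c\<^sup>2 * (norm x)\<^sup>2 / 2)) \<le> ereal ((1 / c\<^sup>2) * (norm y)\<^sup>2 / 2)"
      using ub by (intro SUP_least) simp
    show "ereal ((1 / c\<^sup>2) * (norm y)\<^sup>2 / 2) \<le> (SUP x. ereal (inner x y) - ereal (c\<^sup>2 * (norm x)\<^sup>2 / 2))"
      by (rule SUP_upper2[of "(1/c\<^sup>2) *\<^sub>R y"]) (use att in simp_all)
  qed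
qed



lemma V_formula:
  fixes c :: real and g :: "'a::euclidean_space \<Rightarrow> real"
  assumes "c \<noteq> 0"
  shows "V_orlicz h F1 F2 (\<lambda>x::'a. ereal (c\<^sup>2 * (norm x)\<^sup>2 / 2)) g
     = (\<integral>\<^sup>+x. ennreal (h (g (c\<^sup>2 *\<^sub>R x) / F2 (c\<^sup>2 * (norm x)\<^sup>2 / 2)) * F1 (c\<^sup>2 * (norm x)\<^sup>2 / 2)) \<partial>lebesgue)"
proof -
  have X: "Xset (\<lambda>x::'a. ereal (c\<^sup>2 * (norm x)\<^sup>2 / 2)) = UNIV"
    using assms by (intro Xset_quad) simp
  have e: "c\<^sup>2 * (inner x x) - c\<^sup>2 * (norm x)\<^sup>2 / 2 = c\<^sup>2 * (norm x)\<^sup>2 / 2" for x :: 'a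
    by (simp add: power2_norm_eq_inner)
  show ?thesis unfolding V_orlicz_def X grad_quad by (simp add: e)
qed

lemma borel_leb: "f \<in> borel_measurable borel \<Longrightarrow> (f::'a::euclidean_space \<Rightarrow> 'b::topological_space) \<in> borel_measurable lebesgue"
  by (simp add: measurable_completion)

lemma scale_integrable:
  fixes g :: "'a::euclidean_space \<Rightarrow> real"
  assumes gi: "integrable lebesgue g" and gpos: "\<forall>x. 0 < g x" and r: "r \<noteq> 0"
  shows "integrable lebesgue (\<lambda>x. g (r *\<^sub>R x))"
    "(\<integral>x. g (r *\<^sub>R x) \<partial>lebesgue) = (\<integral>x. g x \<partial>lebesgue) / \<bar>r\<bar> ^ DIM('a)"
proof -
  have gm[measurable]: "g \<in> borel_measurable lebesgue" using gi by simp
  have gm2: "(\<lambda>x. g (r *\<^sub>R x)) \<in> borel_measurable lebesgue"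
    by (rule measurable_compose[OF lebesgue_measurable_scaling gm])
  have "(\<integral>\<^sup>+x. ennreal (g x) \<partial>lebesgue) = ennreal (\<bar>r\<bar> ^ DIM('a)) * (\<integral>\<^sup>+x. ennreal (g (r *\<^sub>R x)) \<partial>lebesgue)"
    using r by (intro nn_integral_scale_lebesgue) simp_all
  moreover have "(\<integral>\<^sup>+x. ennreal (g x) \<partial>lebesgue) = ennreal (\<integral>x. g x \<partial>lebesgue)"
    using gi gpos by (intro nn_integral_eq_integral) (auto intro: less_imp_le)
  ultimately have E: "ennreal (\<bar>r\<bar> ^ DIM('a)) * (\<integral>\<^sup>+x. ennreal (g (r *\<^sub>R x)) \<partial>lebesgue) = ennreal (\<bar>r\<bar> ^ DIM('a)) * ennreal ((\<integral>x. g x \<partial>lebesgue) / \<bar>r\<bar> ^ DIM('a))"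
    using r by (simp add: ennreal_mult'[symmetric])
  have eq: "(\<integral>\<^sup>+x. ennreal (g (r *\<^sub>R x)) \<partial>lebesgue) = ennreal ((\<integral>x. g x \<partial>lebesgue) / \<bar>r\<bar> ^ DIM('a))"
    using E r by (subst (asm) ennreal_mult_cancel_left) auto
  show int2: "integrable lebesgue (\<lambda>x. g (r *\<^sub>R x))"
    unfolding integrable_iff_bounded using gm2 eq gpos by (simp add: less_imp_le)
  show "(\<integral>x. g (r *\<^sub>R x) \<partial>lebesgue) = (\<integral>x. g x \<partial>lebesgue) / \<bar>r\<bar> ^ DIM('a)"
  proof -
    have "(\<integral>x. g (r *\<^sub>R x) \<partial>lebesgue) = enn2real (\<integral>\<^sup>+x. ennreal (g (r *\<^sub>R x)) \<partial>lebesgue)"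
      using gm2 gpos by (intro integral_eq_nn_integral) (auto intro: less_imp_le)
    also have "\<dots> = (\<integral>x. g x \<partial>lebesgue) / \<bar>r\<bar> ^ DIM('a)"
    proof -
      have "0 \<le> (\<integral>x. g x \<partial>lebesgue)" using gpos by (intro integral_nonneg_AE) (auto intro: less_imp_le)
      then show ?thesis unfolding eq by simp
    qed
    finally show ?thesis .
  qed
qed



lemma Fplus_quad:
  assumes "k \<noteq> 0"
  shows "Fplus (\<lambda>y::'a::euclidean_space. ereal (k * (norm y)\<^sup>2 / 2))
     = {g. (\<forall>x. 0 < g x) \<and> integrable lebesgue g \<and> 0 < (\<integral>x. g x \<partial>lebesgue)}"
    and "I_g g (\<lambda>y::'a::euclidean_space. ereal (k * (norm y)\<^sup>2 / 2)) = (\<integral>x. g x \<partial>lebesgue)"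
  using Xset_quad[OF assms, where 'a='a]
  by (simp_all add: Fplus_def I_g_def set_integrable_def set_lebesgue_integral_def)

lemma main_bound:
  fixes F :: "real \<Rightarrow> real" and a b c Ir :: real and h :: "real \<Rightarrow> real" and g :: "'a::euclidean_space \<Rightarrow> real"
  assumes a: "0 < a" and b: "0 < b" and c: "0 < c"
    and Fm[measurable]: "F \<in> borel_measurable borel" and Fpos: "\<forall>t. 0 < F t"
    and Ic: "I_F F c TYPE('a) = ennreal Ir" and Ir: "0 < Ir"
    and hpos: "\<forall>t>0. 0 < h t" and hc: "continuous_on {0<..} h"
    and gi: "integrable lebesgue g" and gpos: "\<forall>x. 0 < g x" and J: "0 < (\<integral>x. g x \<partial>lebesgue)"
  defines "m \<equiv> sqrt (2 * pi) ^ DIM('a) / (c ^ (2 * DIM('a)) * b * Ir)"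
    and "Vg \<equiv> V_orlicz h (\<lambda>t. a * F t) (\<lambda>t. b * F t) (\<lambda>x::'a. ereal (c\<^sup>2 * (norm x)\<^sup>2 / 2))
                (normalize_g (\<lambda>y::'a. ereal ((1 / c\<^sup>2) * (norm y)\<^sup>2 / 2)) g)"
  shows main_bound_convex: "convex_on {0<..} h \<Longrightarrow> ennreal (a * Ir * h m) \<le> Vg"
    and main_bound_concave: "concave_on {0<..} h \<Longrightarrow> mono_on {0<..} h \<Longrightarrow> Vg \<le> ennreal (a * Ir * h m)"
proof -
  define n where "n = DIM('a)"
  define s where "s = sqrt (2 * pi) ^ n"
  have spos: "0 < s" by (simp add: s_def)
  define J where "J = (\<integral>x. g x \<partial>lebesgue)"
  have Jpos: "0 < J" using J by (simp add: J_def)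
  define \<phi> where "\<phi> = (\<lambda>x::'a. F (c\<^sup>2 * (norm x)\<^sup>2 / 2))"
  have \<phi>m[measurable]: "\<phi> \<in> borel_measurable lebesgue"
    unfolding \<phi>_def by (intro borel_leb) measurable
  have \<phi>pos: "0 < \<phi> x" for x using Fpos by (simp add: \<phi>_def)
  have gm[measurable]: "g \<in> borel_measurable lebesgue" using gi by simp
  define g' where "g' = (\<lambda>y. s * g y / J)"
  have ng: "normalize_g (\<lambda>y::'a. ereal ((1 / c\<^sup>2) * (norm y)\<^sup>2 / 2)) g = g'"
    using c unfolding normalize_g_def g'_def s_def n_def J_def
    by (subst Fplus_quad(2)) simp_all
  have Vg: "Vg = (\<integral>\<^sup>+x. ennreal (h (g' (c\<^sup>2 *\<^sub>R x) / (b * \<phi> x)) * (a * \<phi> x)) \<partial>lebesgue)"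
    unfolding Vg_def ng using c by (subst V_formula) (simp_all add: \<phi>_def)
  define X where "X = (\<lambda>x. g' (c\<^sup>2 *\<^sub>R x) / (b * \<phi> x))"
  define w where "w = (\<lambda>x. a * \<phi> x)"
  have wm: "w \<in> borel_measurable lebesgue" unfolding w_def by measurable
  have wpos: "\<forall>x. 0 < w x" using a \<phi>pos by (simp add: w_def)
  have wint: "(\<integral>\<^sup>+x. ennreal (w x) \<partial>lebesgue) = ennreal (a * Ir)"
  proof -
    have "(\<integral>\<^sup>+x. ennreal (w x) \<partial>lebesgue) = (\<integral>\<^sup>+x. ennreal a * ennreal (\<phi> x) \<partial>lebesgue)"
      using a \<phi>pos by (intro nn_integral_cong) (simp add: w_def ennreal_mult less_imp_le)
    also have "\<dots> = ennreal a * ennreal Ir"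
    proof -
      have Ic': "(\<integral>\<^sup>+x. ennreal (\<phi> x) \<partial>lebesgue) = ennreal Ir" using Ic by (simp add: I_F_def \<phi>_def)
      have "(\<lambda>x. ennreal (\<phi> x)) \<in> borel_measurable lebesgue" by measurable
      from nn_integral_cmult[OF this, of "ennreal a"] show ?thesis by (simp add: Ic')
    qed
    finally show ?thesis using a by (simp add: ennreal_mult')
  qed
  have gsm: "(\<lambda>x. g (c\<^sup>2 *\<^sub>R x)) \<in> borel_measurable lebesgue"
    by (rule measurable_compose[OF lebesgue_measurable_scaling gm])
  have Xm: "X \<in> borel_measurable lebesgue"
    unfolding X_def g'_def using gsm by measurable
  have Xpos: "\<forall>x. 0 < X x" using gpos spos Jpos b \<phi>pos by (simp add: X_def g'_def)
  have wX: "(\<lambda>x. w x * X x) = (\<lambda>x. (a / b * s / J) * g (c\<^sup>2 *\<^sub>R x))"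
    using \<phi>pos b by (auto simp: fun_eq_iff w_def X_def g'_def field_simps dest: less_imp_neq[symmetric])
  have c2: "c\<^sup>2 \<noteq> 0" using c by simp
  have Xint: "integrable lebesgue (\<lambda>x. w x * X x)"
    unfolding wX by (intro integrable_mult_right scale_integrable(1)[OF gi gpos c2])
  have intwX: "(\<integral>x. w x * X x \<partial>lebesgue) = (a / b * s / J) * (J / (c\<^sup>2) ^ n)"
    unfolding wX using scale_integrable(2)[OF gi gpos c2] by (simp add: J_def n_def)
  have mm: "(\<integral>x. w x * X x \<partial>lebesgue) / (a * Ir) = m"
  proof -
    have "(c\<^sup>2) ^ DIM('a) = (c ^ DIM('a))\<^sup>2" by (metis power_mult mult.commute)
    then show ?thesis unfolding intwX m_def s_def n_def using a b Jpos Ir c by (simp add: power_mult field_simps)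
  qed
  define h' where "h' = (\<lambda>t::real. if t \<in> {0<..} then h t else 0)"
  have h'm: "h' \<in> borel_measurable borel"
    unfolding h'_def by (rule borel_measurable_continuous_on_if) (auto intro: hc continuous_on_const)
  have hXm: "(\<lambda>x. h (X x)) \<in> borel_measurable lebesgue"
  proof -
    have "(\<lambda>x. h' (X x)) \<in> borel_measurable lebesgue"
      using measurable_compose[OF Xm h'm] by (simp add: comp_def)
    moreover have "(\<lambda>x. h' (X x)) = (\<lambda>x. h (X x))" using Xpos by (simp add: h'_def fun_eq_iff)
    ultimately show ?thesis by simp
  qed
  have VgX: "Vg = (\<integral>\<^sup>+x. ennreal (h (X x) * w x) \<partial>lebesgue)"
    unfolding Vg X_def w_def ..
  have aIr: "0 < a * Ir" using a Ir by simp
  note jc = jensen_core[OF wm wpos wint aIr Xm Xpos Xint hXm hpos]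
  show "convex_on {0<..} h \<Longrightarrow> ennreal (a * Ir * h m) \<le> Vg"
    using jc(1) unfolding mm VgX by simp
  show "concave_on {0<..} h \<Longrightarrow> mono_on {0<..} h \<Longrightarrow> Vg \<le> ennreal (a * Ir * h m)"
    using jc(2) unfolding mm VgX by simp
qed



lemma log_concave_scale:
  assumes "log_concave_on (UNIV::'a::real_vector set) f"
  shows "log_concave_on (UNIV::'a set) (\<lambda>y. f (r *\<^sub>R y))"
  unfolding log_concave_on_def
proof (intro ballI allI impI)
  fix x y :: 'a and t :: real
  assume t: "0 \<le> t \<and> t \<le> 1 \<and> t *\<^sub>R x + (1 - t) *\<^sub>R y \<in> UNIV"
  have "f (r *\<^sub>R x) powr t * f (r *\<^sub>R y) powr (1 - t) \<le> f (t *\<^sub>R (r *\<^sub>R x) + (1 - t) *\<^sub>R (r *\<^sub>R y))"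
    using assms t unfolding log_concave_on_def by blast
  also have "t *\<^sub>R (r *\<^sub>R x) + (1 - t) *\<^sub>R (r *\<^sub>R y) = r *\<^sub>R (t *\<^sub>R x + (1 - t) *\<^sub>R y)"
    by (simp add: scaleR_add_right mult.commute)
  finally show "f (r *\<^sub>R x) powr t * f (r *\<^sub>R y) powr (1 - t) \<le> f (r *\<^sub>R (t *\<^sub>R x + (1 - t) *\<^sub>R y))" .
qed

lemma witness:
  fixes F :: "real \<Rightarrow> real" and a b c Ir :: real and h :: "real \<Rightarrow> real"
  assumes a: "0 < a" and b: "0 < b" and c: "0 < c"
    and Fm[measurable]: "F \<in> borel_measurable borel" and Fpos: "\<forall>t. 0 < F t"
    and Ic: "I_F F c TYPE('a::euclidean_space) = ennreal Ir" and Ir: "0 < Ir"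
  defines "m \<equiv> sqrt (2 * pi) ^ DIM('a) / (c ^ (2 * DIM('a)) * b * Ir)"
    and "g0 \<equiv> (\<lambda>y::'a. F (c\<^sup>2 * (norm ((1 / c\<^sup>2) *\<^sub>R y))\<^sup>2 / 2))"
  shows "g0 \<in> Fplus (\<lambda>y::'a. ereal ((1 / c\<^sup>2) * (norm y)\<^sup>2 / 2))"
    and "V_orlicz h (\<lambda>t. a * F t) (\<lambda>t. b * F t) (\<lambda>x::'a. ereal (c\<^sup>2 * (norm x)\<^sup>2 / 2))
                (normalize_g (\<lambda>y::'a. ereal ((1 / c\<^sup>2) * (norm y)\<^sup>2 / 2)) g0) = ennreal (a * Ir * h m)"
proof -
  define n where "n = DIM('a)"
  define s where "s = sqrt (2 * pi) ^ n"
  have spos: "0 < s" by (simp add: s_def)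
  define \<phi> where "\<phi> = (\<lambda>x::'a. F (c\<^sup>2 * (norm x)\<^sup>2 / 2))"
  have \<phi>m[measurable]: "\<phi> \<in> borel_measurable lebesgue"
    unfolding \<phi>_def by (intro borel_leb) measurable
  have \<phi>pos: "0 < \<phi> x" for x using Fpos by (simp add: \<phi>_def)
  have g0\<phi>: "g0 y = \<phi> ((1 / c\<^sup>2) *\<^sub>R y)" for y by (simp add: g0_def \<phi>_def)
  have g0m[measurable]: "g0 \<in> borel_measurable lebesgue"
    unfolding g0_def by (intro borel_leb) measurable
  have g0pos: "\<forall>x. 0 < g0 x" using \<phi>pos by (simp add: g0\<phi>)
  have g0c: "g0 (c\<^sup>2 *\<^sub>R x) = \<phi> x" for x using c by (simp add: g0\<phi>)
  have c2: "c\<^sup>2 \<noteq> 0" using c by simp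
  have Ic': "(\<integral>\<^sup>+x. ennreal (\<phi> x) \<partial>lebesgue) = ennreal Ir" using Ic by (simp add: I_F_def \<phi>_def)
  define J0 where "J0 = (c\<^sup>2) ^ n * Ir"
  have J0pos: "0 < J0" using c Ir by (simp add: J0_def)
  have nn0: "(\<integral>\<^sup>+x. ennreal (g0 x) \<partial>lebesgue) = ennreal J0"
  proof -
    have "(\<integral>\<^sup>+x. ennreal (g0 x) \<partial>lebesgue) = ennreal (\<bar>c\<^sup>2\<bar> ^ DIM('a)) * (\<integral>\<^sup>+x. ennreal (g0 (c\<^sup>2 *\<^sub>R x)) \<partial>lebesgue)"
      using c2 by (intro nn_integral_scale_lebesgue) simp_all
    also have "\<dots> = ennreal ((c\<^sup>2) ^ n) * ennreal Ir" by (simp add: g0c Ic' n_def)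
    finally show ?thesis using c by (simp add: J0_def ennreal_mult')
  qed
  have g0i: "integrable lebesgue g0"
    unfolding integrable_iff_bounded using g0pos nn0 by (simp add: less_imp_le)
  have intg0: "(\<integral>x. g0 x \<partial>lebesgue) = J0"
  proof -
    have "(\<integral>x. g0 x \<partial>lebesgue) = enn2real (\<integral>\<^sup>+x. ennreal (g0 x) \<partial>lebesgue)"
      using g0pos by (intro integral_eq_nn_integral) (auto intro: less_imp_le)
    then show ?thesis using nn0 J0pos by simp
  qed
  show "g0 \<in> Fplus (\<lambda>y::'a. ereal ((1 / c\<^sup>2) * (norm y)\<^sup>2 / 2))"
    using c g0pos g0i intg0 J0pos by (subst Fplus_quad(1)) simp_all
  have ng: "normalize_g (\<lambda>y::'a. ereal ((1 / c\<^sup>2) * (norm y)\<^sup>2 / 2)) g0 = (\<lambda>y. s * g0 y / J0)"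
    using c unfolding normalize_g_def s_def n_def
    by (subst Fplus_quad(2)) (simp_all add: intg0)
  have arg: "s * g0 (c\<^sup>2 *\<^sub>R x) / J0 / (b * \<phi> x) = m" for x
  proof -
    have "(c\<^sup>2) ^ DIM('a) = c ^ (2 * DIM('a))" by (simp add: power_mult)
    then show ?thesis using \<phi>pos[of x] b J0pos
      by (simp add: g0c m_def s_def n_def J0_def field_simps)
  qed
  have "V_orlicz h (\<lambda>t. a * F t) (\<lambda>t. b * F t) (\<lambda>x::'a. ereal (c\<^sup>2 * (norm x)\<^sup>2 / 2))
                (normalize_g (\<lambda>y::'a. ereal ((1 / c\<^sup>2) * (norm y)\<^sup>2 / 2)) g0)
      = (\<integral>\<^sup>+x. ennreal (h (s * g0 (c\<^sup>2 *\<^sub>R x) / J0 / (b * \<phi> x)) * (a * \<phi> x)) \<partial>lebesgue)"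
    unfolding ng using c by (subst V_formula) (simp_all add: \<phi>_def)
  also have "\<dots> = (\<integral>\<^sup>+x. ennreal (h m * a) * ennreal (\<phi> x) \<partial>lebesgue)"
  proof (intro nn_integral_cong)
    fix x
    have "0 \<le> \<phi> x" using \<phi>pos[of x] by simp
    then have "ennreal (h m * a) * ennreal (\<phi> x) = ennreal (h m * a * \<phi> x)" by (rule ennreal_mult''[symmetric])
    then show "ennreal (h (s * g0 (c\<^sup>2 *\<^sub>R x) / J0 / (b * \<phi> x)) * (a * \<phi> x)) = ennreal (h m * a) * ennreal (\<phi> x)"
      unfolding arg by (simp add: mult.assoc)
  qed
  also have "\<dots> = ennreal (h m * a) * ennreal Ir"
  proof -
    have "(\<lambda>x. ennreal (\<phi> x)) \<in> borel_measurable lebesgue" by measurable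
    from nn_integral_cmult[OF this, of "ennreal (h m * a)"] show ?thesis by (simp add: Ic')
  qed
  also have "\<dots> = ennreal (a * Ir * h m)"
    using Ir by (simp add: ennreal_mult'[symmetric] mult_ac)
  finally show "V_orlicz h (\<lambda>t. a * F t) (\<lambda>t. b * F t) (\<lambda>x::'a. ereal (c\<^sup>2 * (norm x)\<^sup>2 / 2))
                (normalize_g (\<lambda>y::'a. ereal ((1 / c\<^sup>2) * (norm y)\<^sup>2 / 2)) g0) = ennreal (a * Ir * h m)" .
qed



lemma Phi_props:
  assumes "h \<in> PhiSet"
  shows "convex_on {0<..} h" "\<forall>t>0. 0 < h t" "continuous_on {0<..} h"
proof -
  show "\<forall>t>0. 0 < h t" "continuous_on {0<..} h" using assms by (auto simp: PhiSet_def admissible_h_def)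
  have cvx: "convex ({0<..}::real set)" by simp
  from assms consider (k) "const_on_pos h" | (s) "strictly_convex_on {0<..} h"
    by (auto simp: PhiSet_def)
  then show "convex_on {0<..} h"
  proof cases
    case k
    then obtain k where hk: "\<forall>t>0. h t = k" by (auto simp: const_on_pos_def)
    show ?thesis
    proof (rule convex_onI[OF _ cvx])
      fix t x y :: real assume "0 < t" "t < 1" "x \<in> {0<..}" "y \<in> {0<..}"
      moreover have "0 < (1 - t) *\<^sub>R x + t *\<^sub>R y" using calculation
        by (simp add: add_pos_pos)
      ultimately show "h ((1 - t) *\<^sub>R x + t *\<^sub>R y) \<le> (1 - t) * h x + t * h y"
        using hk by (simp add: algebra_simps)
    qed
  next
    case s
    show ?thesis
    proof (rule convex_onI[OF _ cvx])
      fix t x y :: real assume a: "0 < t" "t < 1" "x \<in> {0<..}" "y \<in> {0<..}"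
      show "h ((1 - t) *\<^sub>R x + t *\<^sub>R y) \<le> (1 - t) * h x + t * h y"
      proof (cases "x = y")
        case True then show ?thesis by (simp add: algebra_simps)
      next
        case False then show ?thesis
          using s a unfolding strictly_convex_on_def by (auto intro: less_imp_le)
      qed
    qed
  qed
qed

lemma Psi_props:
  assumes "h \<in> PsiSet"
  shows "concave_on {0<..} h" "mono_on {0<..} h" "\<forall>t>0. 0 < h t" "continuous_on {0<..} h"
proof -
  show "\<forall>t>0. 0 < h t" "continuous_on {0<..} h" using assms by (auto simp: PsiSet_def admissible_h_def)
  have cvx: "convex ({0<..}::real set)" by simp
  from assms consider (k) "const_on_pos h" | (s) "mono_on {0<..} h" "strictly_concave_on {0<..} h"
    by (auto simp: PsiSet_def)
  then have cm: "concave_on {0<..} h \<and> mono_on {0<..} h" 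
  proof cases
    case k
    then obtain k where hk: "\<forall>t>0. h t = k" by (auto simp: const_on_pos_def)
    have "convex_on {0<..} (\<lambda>x. - h x)"
    proof (rule convex_onI[OF _ cvx])
      fix t x y :: real assume "0 < t" "t < 1" "x \<in> {0<..}" "y \<in> {0<..}"
      moreover have "0 < (1 - t) *\<^sub>R x + t *\<^sub>R y" using calculation
        by (simp add: add_pos_pos)
      ultimately show "- h ((1 - t) *\<^sub>R x + t *\<^sub>R y) \<le> (1 - t) * - h x + t * - h y"
        using hk by (simp add: algebra_simps)
    qed
    then have "concave_on {0<..} h" using convex_on_iff_concave[of _ "\<lambda>x. - h x"] by simp
    moreover have "mono_on {0<..} h" using hk by (intro mono_onI) simp
    ultimately show ?thesis by simp
  next
    case s
    have "convex_on {0<..} (\<lambda>x. - h x)"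
    proof (rule convex_onI[OF _ cvx])
      fix t x y :: real assume a: "0 < t" "t < 1" "x \<in> {0<..}" "y \<in> {0<..}"
      show "- h ((1 - t) *\<^sub>R x + t *\<^sub>R y) \<le> (1 - t) * - h x + t * - h y"
      proof (cases "x = y")
        case True then show ?thesis by (simp add: algebra_simps)
      next
        case False then show ?thesis
          using s(2) a unfolding strictly_concave_on_def strictly_convex_on_def
          by (auto intro: less_imp_le)
      qed
    qed
    then have "concave_on {0<..} h" using convex_on_iff_concave[of _ "\<lambda>x. - h x"] by simp
    then show ?thesis using s(1) by simp
  qed
  from cm show "concave_on {0<..} h" "mono_on {0<..} h" by auto
qed



theorem corollary2p1:
  fixes F :: "real \<Rightarrow> real" and a b c :: real and h :: "real \<Rightarrow> real"
  assumes "0 < a" "0 < b" "0 < c"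
    and "F \<in> borel_measurable borel" "\<forall>t. 0 < F t"
    and "0 < I_F F 1 TYPE('a::euclidean_space)" "I_F F 1 TYPE('a) < \<infinity>"
    and "h \<in> PhiSet \<union> PsiSet"
  defines "\<psi>c \<equiv> (\<lambda>x::'a. ereal (c\<^sup>2 * (norm x)\<^sup>2 / 2))"
    and "val \<equiv> a * enn2real (I_F F c TYPE('a)) *
           h (sqrt (2 * pi) ^ DIM('a) / (c ^ (2 * DIM('a)) * b * enn2real (I_F F c TYPE('a))))"
  shows "(h \<in> PhiSet \<longrightarrow> as_orlicz_inf h (\<lambda>t. a * F t) (\<lambda>t. b * F t) \<psi>c = ennreal val)
       \<and> (h \<in> PsiSet \<longrightarrow> as_orlicz_sup h (\<lambda>t. a * F t) (\<lambda>t. b * F t) \<psi>c = ennreal val)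
       \<and> (log_concave_on (UNIV::'a set) (\<lambda>x. F ((norm x)\<^sup>2 / 2)) \<longrightarrow>
            (h \<in> PhiSet \<longrightarrow> G_orlicz_inf h (\<lambda>t. a * F t) (\<lambda>t. b * F t) \<psi>c = ennreal val)
          \<and> (h \<in> PsiSet \<longrightarrow> G_orlicz_sup h (\<lambda>t. a * F t) (\<lambda>t. b * F t) \<psi>c = ennreal val))"
proof -
  note a = assms(1) and b = assms(2) and c = assms(3) and Fm[measurable] = assms(4)
    and Fpos = assms(5) and I1pos = assms(6) and I1fin = assms(7)
  define Ir where "Ir = enn2real (I_F F c TYPE('a))"
  have I1: "I_F F 1 TYPE('a) = ennreal (c ^ DIM('a)) * I_F F c TYPE('a)"
  proof -
    have m: "(\<lambda>x::'a. ennreal (F (1\<^sup>2 * (norm x)\<^sup>2 / 2))) \<in> borel_measurable lebesgue"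
      by (intro borel_leb) measurable
    have "I_F F 1 TYPE('a) = ennreal (\<bar>c\<bar> ^ DIM('a)) * (\<integral>\<^sup>+x. ennreal (F (1\<^sup>2 * (norm (c *\<^sub>R (x::'a)))\<^sup>2 / 2)) \<partial>lebesgue)"
      unfolding I_F_def using c by (subst nn_integral_scale_lebesgue[OF m, of c]) simp_all
    also have "\<dots> = ennreal (c ^ DIM('a)) * I_F F c TYPE('a)"
      using c by (simp add: I_F_def power_mult_distrib)
    finally show ?thesis .
  qed
  have cn: "0 < c ^ DIM('a)" using c by simp
  have Icfin: "I_F F c TYPE('a) < \<infinity>"
  proof (rule ccontr)
    assume "\<not> I_F F c TYPE('a) < \<infinity>"
    then have "I_F F c TYPE('a) = \<infinity>" by (simp add: less_top[symmetric])
    then have "I_F F 1 TYPE('a) = \<infinity>" using I1 cn c by (simp add: ennreal_mult_top)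
    then show False using I1fin by simp
  qed
  have Icpos: "0 < I_F F c TYPE('a)"
  proof (rule ccontr)
    assume "\<not> 0 < I_F F c TYPE('a)"
    then have "I_F F c TYPE('a) = 0" by (simp add: not_gr_zero)
    then show False using I1 I1pos by simp
  qed
  have Ic: "I_F F c TYPE('a) = ennreal Ir" unfolding Ir_def using Icfin by (simp add: less_top)
  have Ir: "0 < Ir" unfolding Ir_def using Icfin Icpos by (simp add: enn2real_positive_iff)
  define m where "m = sqrt (2 * pi) ^ DIM('a) / (c ^ (2 * DIM('a)) * b * Ir)"
  have val: "val = a * Ir * h m" unfolding val_def Ir_def m_def ..
  define \<psi>s where "\<psi>s = (\<lambda>y::'a. ereal ((1 / c\<^sup>2) * (norm y)\<^sup>2 / 2))"
  have leg: "legendre \<psi>c = \<psi>s" unfolding \<psi>c_def \<psi>s_def using c by (rule legendre_quad)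
  define V where "V = (\<lambda>g. V_orlicz h (\<lambda>t. a * F t) (\<lambda>t. b * F t) \<psi>c (normalize_g \<psi>s g))"
  define g0 where "g0 = (\<lambda>y::'a. F (c\<^sup>2 * (norm ((1 / c\<^sup>2) *\<^sub>R y))\<^sup>2 / 2))"
  have g0F: "g0 \<in> Fplus \<psi>s" unfolding g0_def \<psi>s_def by (rule witness(1)[OF a b c Fm Fpos Ic Ir])
  have Vg0: "V g0 = ennreal val" unfolding V_def val \<psi>c_def \<psi>s_def m_def g0_def
    by (rule witness(2)[OF a b c Fm Fpos Ic Ir])
  have Fp: "g \<in> Fplus \<psi>s \<Longrightarrow> integrable lebesgue g \<and> (\<forall>x. 0 < g x) \<and> 0 < (\<integral>x. g x \<partial>lebesgue)" for g
    unfolding \<psi>s_def using c by (subst (asm) Fplus_quad(1)) auto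
  have lowb: "ennreal val \<le> V g" if "h \<in> PhiSet" "g \<in> Fplus \<psi>s" for g
    using Phi_props[OF that(1)] Fp[OF that(2)]
    unfolding val V_def \<psi>c_def \<psi>s_def m_def
    by (intro main_bound_convex[OF a b c Fm Fpos Ic Ir]) auto
  have uppb: "V g \<le> ennreal val" if "h \<in> PsiSet" "g \<in> Fplus \<psi>s" for g
    using Psi_props[OF that(1)] Fp[OF that(2)]
    unfolding val V_def \<psi>c_def \<psi>s_def m_def
    by (intro main_bound_concave[OF a b c Fm Fpos Ic Ir]) auto
  have XS: "Xset \<psi>s = UNIV" unfolding \<psi>s_def using c by (intro Xset_quad) simp
  have LF: "Lset \<psi>s \<subseteq> Fplus \<psi>s" by (auto simp: Lset_def)
  have g0L: "g0 \<in> Lset \<psi>s" if lc: "log_concave_on (UNIV::'a set) (\<lambda>x. F ((norm x)\<^sup>2 / 2))"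
  proof -
    have eq: "g0 = (\<lambda>y. (\<lambda>x. F ((norm x)\<^sup>2 / 2)) ((1 / c) *\<^sub>R y))"
    proof
      fix y :: 'a
      have "c\<^sup>2 * (norm ((1 / c\<^sup>2) *\<^sub>R y))\<^sup>2 / 2 = (norm ((1 / c) *\<^sub>R y))\<^sup>2 / 2"
        using c by (simp add: power2_eq_square field_simps)
      then show "g0 y = (\<lambda>x. F ((norm x)\<^sup>2 / 2)) ((1 / c) *\<^sub>R y)" by (simp add: g0_def)
    qed
    have "log_concave_on UNIV g0" unfolding eq by (rule log_concave_scale[OF lc])
    then show ?thesis using g0F XS by (simp add: Lset_def)
  qed
  have A1: "as_orlicz_inf h (\<lambda>t. a * F t) (\<lambda>t. b * F t) \<psi>c = (INF g\<in>Fplus \<psi>s. V g)"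
    unfolding as_orlicz_inf_def leg V_def ..
  have A2: "as_orlicz_sup h (\<lambda>t. a * F t) (\<lambda>t. b * F t) \<psi>c = (SUP g\<in>Fplus \<psi>s. V g)"
    unfolding as_orlicz_sup_def leg V_def ..
  have A3: "G_orlicz_inf h (\<lambda>t. a * F t) (\<lambda>t. b * F t) \<psi>c = (INF g\<in>Lset \<psi>s. V g)"
    unfolding G_orlicz_inf_def leg V_def ..
  have A4: "G_orlicz_sup h (\<lambda>t. a * F t) (\<lambda>t. b * F t) \<psi>c = (SUP g\<in>Lset \<psi>s. V g)"
    unfolding G_orlicz_sup_def leg V_def ..
  show ?thesis
  proof (intro conjI impI)
    assume hP: "h \<in> PhiSet"
    show "as_orlicz_inf h (\<lambda>t. a * F t) (\<lambda>t. b * F t) \<psi>c = ennreal val"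
      unfolding A1
    proof (rule antisym)
      show "(INF g\<in>Fplus \<psi>s. V g) \<le> ennreal val" using g0F Vg0 by (metis INF_lower)
      show "ennreal val \<le> (INF g\<in>Fplus \<psi>s. V g)" using lowb[OF hP] by (intro INF_greatest) auto
    qed
  next
    assume hP: "h \<in> PsiSet"
    show "as_orlicz_sup h (\<lambda>t. a * F t) (\<lambda>t. b * F t) \<psi>c = ennreal val"
      unfolding A2
    proof (rule antisym)
      show "ennreal val \<le> (SUP g\<in>Fplus \<psi>s. V g)" using g0F Vg0 by (metis SUP_upper)
      show "(SUP g\<in>Fplus \<psi>s. V g) \<le> ennreal val" using uppb[OF hP] by (intro SUP_least) auto
    qed
  next
    assume lc: "log_concave_on (UNIV::'a set) (\<lambda>x. F ((norm x)\<^sup>2 / 2))" and hP: "h \<in> PhiSet"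
    show "G_orlicz_inf h (\<lambda>t. a * F t) (\<lambda>t. b * F t) \<psi>c = ennreal val"
      unfolding A3
    proof (rule antisym)
      show "(INF g\<in>Lset \<psi>s. V g) \<le> ennreal val" using g0L[OF lc] Vg0 by (metis INF_lower)
      show "ennreal val \<le> (INF g\<in>Lset \<psi>s. V g)" using lowb[OF hP] LF by (intro INF_greatest) auto
    qed
  next
    assume lc: "log_concave_on (UNIV::'a set) (\<lambda>x. F ((norm x)\<^sup>2 / 2))" and hP: "h \<in> PsiSet"
    show "G_orlicz_sup h (\<lambda>t. a * F t) (\<lambda>t. b * F t) \<psi>c = ennreal val"
      unfolding A4
    proof (rule antisym)
      show "ennreal val \<le> (SUP g\<in>Lset \<psi>s. V g)" using g0L[OF lc] Vg0 by (metis SUP_upper)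
      show "(SUP g\<in>Lset \<psi>s. V g) \<le> ennreal val" using uppb[OF hP] LF by (intro SUP_least) auto
    qed
  qed
qed

end
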